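(* Let $R$ be a Noetherian Banach–Tate $\mathbb{Z}_p$-algebra with norm $|\cdot|$ and multiplicative pseudo-uniformizer $\varpi$, and let $\kappa:T_0\to R^\times$ be a continuous character. Then there exists a norm $|\cdot|'$ on $R$ making $R$ a Banach–Tate $\mathbb{Z}_p$-algebra, bounded-equivalent to $|\cdot|^s$ for some real $s>0$, such that $|\kappa(t)|'\le1$ for all $t\in T_0$, $|\kappa(t)-1|'<1$ for all $t\in T_\epsilon$, and $\varpi$ is a multiplicative pseudo-uniformizer for $|\cdot|'$.
   Context: $p$ prime, $\epsilon=1$ if $p\neq2$ and $\epsilon=2$ if $p=2$. $T_0=\mathbf{T}(\mathbb{Z}_p)$ where $\mathbf{T}=\prod_{v\mid p}\mathrm{Res}_{\mathcal{O}_{F_v}/\mathbb{Z}_p}\mathbf{T}_v$ for split tori $\mathbf{T}_v$ over $\mathcal{O}_{F_v}$ ($F$ a number field), and $T_\epsilon=\ker(T_0\to\mathbf{T}(\mathbb{Z}/p^\epsilon))$. Norms are non-archimedean, submultiplicative, $|1|=1$. A Banach–Tate $\mathbb{Z}_p$-algebra is a complete normed ring with a unit $\varpi$, $|\varpi|<1$, $|\varpi s|=|\varpi||s|$ for all $s$ (multiplicative pseudo-uniformizer), and a ring map $\mathbb{Z}_p\to R$ with $|x|\le|x|_p$. Norms $|\cdot|_1,|\cdot|_2$ are bounded-equivalent if $C_1|r|_1\le|r|_2\le C_2|r|_1$ for constants $C_1,C_2>0$. *)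

theory Defs
  imports "HOL-Analysis.Analysis" "HOL-Computational_Algebra.Polynomial"
begin

text \<open>For a monic integer polynomial f, the ring Z_p[x]/(f) is modelled as the inverse
limit of the finite rings Z[x]/(p^n, f).  An element is a coherent sequence a of
canonical representatives: a n is a polynomial of degree < deg f with coefficients in
[0, p^n), and reducing a (Suc n) modulo p^n gives a n.\<close>

definition red :: "nat \<Rightarrow> nat \<Rightarrow> int poly \<Rightarrow> int poly \<Rightarrow> int poly" where
  "red p n f g = map_poly (\<lambda>c. c mod (int p ^ n)) (pseudo_mod g f)"

definition Ocarr :: "nat \<Rightarrow> int poly \<Rightarrow> (nat \<Rightarrow> int poly) set" where
  "Ocarr p f = {a. \<forall>n. red p n f (a n) = a n \<and> red p n f (a (Suc n)) = a n}"

definition Oadd :: "nat \<Rightarrow> int poly \<Rightarrow> (nat \<Rightarrow> int poly) \<Rightarrow> (nat \<Rightarrow> int poly) \<Rightarrow> (nat \<Rightarrow> int poly)" where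
  "Oadd p f a b = (\<lambda>n. red p n f (a n + b n))"

definition Omult :: "nat \<Rightarrow> int poly \<Rightarrow> (nat \<Rightarrow> int poly) \<Rightarrow> (nat \<Rightarrow> int poly) \<Rightarrow> (nat \<Rightarrow> int poly)" where
  "Omult p f a b = (\<lambda>n. red p n f (a n * b n))"

definition Oone :: "nat \<Rightarrow> int poly \<Rightarrow> (nat \<Rightarrow> int poly)" where
  "Oone p f = (\<lambda>n. red p n f 1)"

definition Ozero :: "nat \<Rightarrow> int poly" where
  "Ozero = (\<lambda>n. 0)"

definition Ounits :: "nat \<Rightarrow> int poly \<Rightarrow> (nat \<Rightarrow> int poly) set" where
  "Ounits p f = {a \<in> Ocarr p f. \<exists>b \<in> Ocarr p f. Omult p f a b = Oone p f}"

text \<open>Z_p[x]/(f) is the ring of integers of a finite extension of Q_p iff it is a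
discrete valuation ring: a domain whose non-units form a principal ideal.\<close>

definition is_local_int_ring :: "nat \<Rightarrow> int poly \<Rightarrow> bool" where
  "is_local_int_ring p f \<longleftrightarrow>
     lead_coeff f = 1 \<and> degree f \<ge> 1 \<and>
     (\<forall>a \<in> Ocarr p f. \<forall>b \<in> Ocarr p f. Omult p f a b = Ozero \<longrightarrow> a = Ozero \<or> b = Ozero) \<and>
     (\<exists>\<pi> \<in> Ocarr p f. \<forall>a \<in> Ocarr p f.
        a \<notin> Ounits p f \<longleftrightarrow> (\<exists>b \<in> Ocarr p f. a = Omult p f \<pi> b))"

text \<open>Z_p itself is the case f = x.\<close>

abbreviation Zp :: "nat \<Rightarrow> (nat \<Rightarrow> int poly) set" where
  "Zp p \<equiv> Ocarr p [:0, 1:]"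

text \<open>A product of split tori, restricted from the O_{F_v} (v | p) to Z_p, has Z_p-points
a finite product of groups O_{F_v}^times; fs lists the corresponding rings
(one entry for each G_m factor, so repetitions encode the ranks).\<close>

definition Tzero :: "nat \<Rightarrow> int poly list \<Rightarrow> (nat \<Rightarrow> nat \<Rightarrow> int poly) set" where
  "Tzero p fs = {t. (\<forall>i < length fs. t i \<in> Ounits p (fs ! i)) \<and>
                     (\<forall>i \<ge> length fs. t i = Ozero)}"

definition Tmult :: "nat \<Rightarrow> int poly list \<Rightarrow> (nat \<Rightarrow> nat \<Rightarrow> int poly) \<Rightarrow> (nat \<Rightarrow> nat \<Rightarrow> int poly) \<Rightarrow> (nat \<Rightarrow> nat \<Rightarrow> int poly)" where
  "Tmult p fs s t = (\<lambda>i. if i < length fs then Omult p (fs ! i) (s i) (t i) else Ozero)"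

definition Tker :: "nat \<Rightarrow> int poly list \<Rightarrow> nat \<Rightarrow> (nat \<Rightarrow> nat \<Rightarrow> int poly) set" where
  "Tker p fs k = {t \<in> Tzero p fs. \<forall>i < length fs. t i k = Oone p (fs ! i) k}"

definition eps :: "nat \<Rightarrow> nat" where
  "eps p = (if p = 2 then 2 else 1)"

definition is_na_norm :: "('r::comm_ring_1 \<Rightarrow> real) \<Rightarrow> bool" where
  "is_na_norm N \<longleftrightarrow>
     (\<forall>x. 0 \<le> N x) \<and> (\<forall>x. N x = 0 \<longleftrightarrow> x = 0) \<and>
     (\<forall>x y. N (x + y) \<le> max (N x) (N y)) \<and> (\<forall>x. N (- x) = N x) \<and>
     (\<forall>x y. N (x * y) \<le> N x * N y) \<and> N 1 = 1"

definition norm_complete :: "('r::comm_ring_1 \<Rightarrow> real) \<Rightarrow> bool" where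
  "norm_complete N \<longleftrightarrow>
     (\<forall>X :: nat \<Rightarrow> 'r. (\<forall>e>0. \<exists>M. \<forall>m\<ge>M. \<forall>n\<ge>M. N (X m - X n) < e) \<longrightarrow>
        (\<exists>L. (\<lambda>n. N (X n - L)) \<longlonglongrightarrow> 0))"

definition mult_pseudo_unif :: "('r::comm_ring_1 \<Rightarrow> real) \<Rightarrow> 'r \<Rightarrow> bool" where
  "mult_pseudo_unif N w \<longleftrightarrow> (\<exists>u. w * u = 1) \<and> N w < 1 \<and> (\<forall>s. N (w * s) = N w * N s)"

text \<open>phi : Z_p \<rightarrow> R is a ring map with |phi x| \<le> |x|_p, i.e. |phi x| \<le> p^-n whenever
x \<in> p^n Z_p (i.e. x n = 0).\<close>

definition zp_alg_map :: "nat \<Rightarrow> ('r::comm_ring_1 \<Rightarrow> real) \<Rightarrow> ((nat \<Rightarrow> int poly) \<Rightarrow> 'r) \<Rightarrow> bool" where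
  "zp_alg_map p N \<phi> \<longleftrightarrow>
     \<phi> (Oone p [:0, 1:]) = 1 \<and>
     (\<forall>a \<in> Zp p. \<forall>b \<in> Zp p. \<phi> (Oadd p [:0, 1:] a b) = \<phi> a + \<phi> b) \<and>
     (\<forall>a \<in> Zp p. \<forall>b \<in> Zp p. \<phi> (Omult p [:0, 1:] a b) = \<phi> a * \<phi> b) \<and>
     (\<forall>a \<in> Zp p. \<forall>n. a n = 0 \<longrightarrow> N (\<phi> a) \<le> (1 / real p) ^ n)"

definition banach_tate_zp :: "nat \<Rightarrow> ('r::comm_ring_1 \<Rightarrow> real) \<Rightarrow> ((nat \<Rightarrow> int poly) \<Rightarrow> 'r) \<Rightarrow> bool" where
  "banach_tate_zp p N \<phi> \<longleftrightarrow> is_na_norm N \<and> norm_complete N \<and>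
     (\<exists>w. mult_pseudo_unif N w) \<and> zp_alg_map p N \<phi>"

definition bounded_equiv :: "('r \<Rightarrow> real) \<Rightarrow> ('r \<Rightarrow> real) \<Rightarrow> bool" where
  "bounded_equiv N1 N2 \<longleftrightarrow> (\<exists>C1>0. \<exists>C2>0. \<forall>r. C1 * N1 r \<le> N2 r \<and> N2 r \<le> C2 * N1 r)"

definition noetherian_ring :: "'r::comm_ring_1 itself \<Rightarrow> bool" where
  "noetherian_ring _ \<longleftrightarrow>
     (\<forall>I :: 'r set. (0 \<in> I \<and> (\<forall>x\<in>I. \<forall>y\<in>I. x + y \<in> I) \<and> (\<forall>r. \<forall>x\<in>I. r * x \<in> I)) \<longrightarrow>
        (\<exists>F. finite F \<and> F \<subseteq> I \<and> I = {\<Sum>x\<in>F. c x * x | c. True}))"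

definition cont_character :: "nat \<Rightarrow> int poly list \<Rightarrow> ('r::comm_ring_1 \<Rightarrow> real) \<Rightarrow> ((nat \<Rightarrow> nat \<Rightarrow> int poly) \<Rightarrow> 'r) \<Rightarrow> bool" where
  "cont_character p fs N \<kappa> \<longleftrightarrow>
     (\<forall>t \<in> Tzero p fs. \<exists>u. \<kappa> t * u = 1) \<and>
     (\<forall>s \<in> Tzero p fs. \<forall>t \<in> Tzero p fs. \<kappa> (Tmult p fs s t) = \<kappa> s * \<kappa> t) \<and>
     (\<forall>t \<in> Tzero p fs. \<forall>e>0. \<exists>n. \<forall>s \<in> Tzero p fs.
         (\<forall>i < length fs. s i n = t i n) \<longrightarrow> N (\<kappa> s - \<kappa> t) < e)"

end

theory Submission
  imports Defs "HOL-Computational_Algebra.Primes"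
begin


definition J :: "nat \<Rightarrow> nat \<Rightarrow> int poly \<Rightarrow> int poly \<Rightarrow> bool" where
  "J p n f y \<longleftrightarrow> (\<exists>q z. y = f * q + smult (int p ^ n) z)"

lemma J_0[simp]: "J p n f 0" unfolding J_def by (rule exI[of _ 0], rule exI[of _ 0]) simp

lemma J_add: "J p n f a \<Longrightarrow> J p n f b \<Longrightarrow> J p n f (a + b)"
proof -
  assume "J p n f a" "J p n f b"
  then obtain q z q' z' where "a = f * q + smult (int p ^ n) z" "b = f * q' + smult (int p ^ n) z'"
    unfolding J_def by blast
  then have "a + b = f * (q + q') + smult (int p ^ n) (z + z')"
    by (simp add: distrib_left smult_add_right)
  then show ?thesis unfolding J_def by blast
qed

lemma J_mult: "J p n f a \<Longrightarrow> J p n f (c * a)"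
proof -
  assume "J p n f a"
  then obtain q z where "a = f * q + smult (int p ^ n) z"
    unfolding J_def by blast
  then have "c * a = f * (c * q) + smult (int p ^ n) (c * z)"
    by (simp add: distrib_left mult_smult_right mult.left_commute)
  then show ?thesis unfolding J_def by blast
qed

lemma J_neg: "J p n f a \<Longrightarrow> J p n f (- a)"
  using J_mult[of p n f a "-1"] by simp

lemma J_diff: "J p n f a \<Longrightarrow> J p n f b \<Longrightarrow> J p n f (a - b)"
  using J_add[of p n f a "-b"] J_neg by simp

lemma J_f: "J p n f (f * q)" unfolding J_def by (rule exI[of _ q], rule exI[of _ 0]) simp

lemma J_pn: "J p n f (smult (int p ^ n) z)" unfolding J_def by (rule exI[of _ 0], rule exI[of _ z]) simp

lemma J_mono: "n \<le> m \<Longrightarrow> J p m f a \<Longrightarrow> J p n f a"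
proof -
  assume "n \<le> m" "J p m f a"
  then obtain q z where a: "a = f * q + smult (int p ^ m) z" unfolding J_def by blast
  have "smult (int p ^ m) z = smult (int p ^ n) (smult (int p ^ (m - n)) z)"
    using \<open>n \<le> m\<close> by (simp add: power_add[symmetric])
  then show ?thesis unfolding J_def a by (intro exI[of _ q] exI[of _ "smult (int p ^ (m - n)) z"]) simp
qed

lemma J_mult2: "J p a f y \<Longrightarrow> J p b f y' \<Longrightarrow> J p (a + b) f (y * y')"
proof -
  assume "J p a f y" "J p b f y'"
  then obtain q z q' z' where y: "y = f * q + smult (int p ^ a) z" and y': "y' = f * q' + smult (int p ^ b) z'"
    unfolding J_def by blast
  have "y * y' = f * (q * y' + smult (int p ^ a) z * q') + smult (int p ^ (a + b)) (z * z')"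
    unfolding y y' by (simp add: algebra_simps power_add)
  then show ?thesis unfolding J_def by blast
qed

lemma pm_monic:
  assumes "lead_coeff f = 1"
  shows "\<exists>q. g = f * q + pseudo_mod g f" "pseudo_mod g f = 0 \<or> degree (pseudo_mod g f) < degree f"
proof -
  have f0: "f \<noteq> 0" using assms by auto
  obtain q r where pdm: "pseudo_divmod g f = (q, r)" by (cases "pseudo_divmod g f") auto
  have r: "r = pseudo_mod g f" unfolding pseudo_mod_def pdm by simp
  from pseudo_divmod[OF f0 pdm] assms show "\<exists>q. g = f * q + pseudo_mod g f" "pseudo_mod g f = 0 \<or> degree (pseudo_mod g f) < degree f"
    by (auto simp: r)
qed

lemma red_J:
  assumes "lead_coeff f = 1"
  shows "J p n f (g - red p n f g)"
proof -
  obtain q where q: "g = f * q + pseudo_mod g f" using pm_monic[OF assms] by blast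
  let ?r = "pseudo_mod g f"
  have "?r - red p n f g = smult (int p ^ n) (map_poly (\<lambda>c. c div (int p ^ n)) ?r)"
    unfolding red_def by (rule poly_eqI) (simp add: coeff_map_poly minus_mod_eq_mult_div[symmetric])
  then have "g - red p n f g = f * q + smult (int p ^ n) (map_poly (\<lambda>c. c div (int p ^ n)) ?r)"
    by (subst q) (simp add: algebra_simps)
  then show ?thesis unfolding J_def by blast
qed

lemma deg_small_smult: "degree (smult c z) \<le> degree z" by (rule degree_smult_le)

lemma pm_monic':
  assumes "lead_coeff f = 1" "degree f \<ge> 1"
  obtains q r where "g = f * q + r" "degree r < degree f" "r = pseudo_mod g f"
  using pm_monic[OF assms(1), of g] assms(2) by force

lemma red_eq:
  assumes f: "lead_coeff f = 1" "degree f \<ge> 1" and J: "J p n f (g - h)"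
  shows "red p n f g = red p n f h"
proof -
  obtain qg rg where qg: "g = f * qg + rg" and dg1: "degree rg < degree f" and rg: "rg = pseudo_mod g f"
    using pm_monic'[OF f] by blast
  obtain qh rh where qh: "h = f * qh + rh" and dg2: "degree rh < degree f" and rh: "rh = pseudo_mod h f"
    using pm_monic'[OF f] by blast
  define d where "d = rg - rh"
  have "d = (g - h) - f * (qg - qh)" unfolding d_def qg qh by (simp add: algebra_simps)
  then have "J p n f d" using J J_diff J_f by metis
  then obtain q z where dz: "d = f * q + smult (int p ^ n) z" unfolding J_def by blast
  obtain qz z0 where qz: "z = f * qz + z0" and dg3: "degree z0 < degree f"
    using pm_monic'[OF f] by blast
  have eq: "d - smult (int p ^ n) z0 = f * (q + smult (int p ^ n) qz)"
    unfolding dz qz by (simp add: smult_add_right distrib_left)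
  have "degree (d - smult (int p ^ n) z0) < degree f"
    unfolding d_def using dg1 dg2 dg3 deg_small_smult[of "int p ^ n" z0]
    by (meson degree_diff_less le_less_trans)
  then have "q + smult (int p ^ n) qz = 0"
  proof (rule contrapos_pp)
    assume Q: "q + smult (int p ^ n) qz \<noteq> 0"
    have "f \<noteq> 0" using f by auto
    then have "degree (f * (q + smult (int p ^ n) qz)) = degree f + degree (q + smult (int p ^ n) qz)"
      using Q by (rule degree_mult_eq)
    then show "\<not> degree (d - smult (int p ^ n) z0) < degree f" unfolding eq by simp
  qed
  then have d: "d = smult (int p ^ n) z0" using eq by simp
  show ?thesis unfolding red_def rg[symmetric] rh[symmetric]
  proof (rule poly_eqI)
    fix i
    have "coeff rg i - coeff rh i = int p ^ n * coeff z0 i"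
      using arg_cong[OF d, of "\<lambda>x. coeff x i"] unfolding d_def by simp
    then have "coeff rg i mod int p ^ n = coeff rh i mod int p ^ n"
      by (simp add: mod_eq_dvd_iff)
    then show "coeff (map_poly (\<lambda>c. c mod int p ^ n) rg) i = coeff (map_poly (\<lambda>c. c mod int p ^ n) rh) i"
      by (simp add: coeff_map_poly)
  qed
qed



definition okf :: "int poly \<Rightarrow> bool" where "okf f \<longleftrightarrow> lead_coeff f = 1 \<and> degree f \<ge> 1"

lemma red_eq_iff: "okf f \<Longrightarrow> red p n f g = red p n f h \<longleftrightarrow> J p n f (g - h)"
proof
  assume f: "okf f" and e: "red p n f g = red p n f h"
  have "g - h = (g - red p n f g) - (h - red p n f h)" using e by simp
  then show "J p n f (g - h)" using red_J[of f p n g] red_J[of f p n h] f unfolding okf_def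
    by (metis J_diff)
next
  assume "okf f" "J p n f (g - h)" then show "red p n f g = red p n f h"
    unfolding okf_def using red_eq by blast
qed

lemma J_red: "okf f \<Longrightarrow> J p n f (red p n f g - g)"
  using red_J[of f p n g] J_neg[of p n f "g - red p n f g"] unfolding okf_def by simp

lemma red_red_le: "okf f \<Longrightarrow> k \<le> n \<Longrightarrow> red p k f (red p n f g) = red p k f g"
  using red_eq_iff J_mono J_red by metis

lemma red_idem[simp]: "okf f \<Longrightarrow> red p n f (red p n f g) = red p n f g"
  using red_red_le by blast

lemma red_add_left: "okf f \<Longrightarrow> red p n f (red p n f a + b) = red p n f (a + b)"
proof -
  assume f: "okf f"
  have "J p n f ((red p n f a + b) - (a + b))" using J_red[OF f, of p n a] by simp
  then show ?thesis using red_eq_iff[OF f] by blast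
qed

lemma red_add_right: "okf f \<Longrightarrow> red p n f (a + red p n f b) = red p n f (a + b)"
  using red_add_left[of f p n b a] by (simp add: add.commute)

lemma red_mult_left: "okf f \<Longrightarrow> red p n f (red p n f a * b) = red p n f (a * b)"
proof -
  assume f: "okf f"
  have "J p n f ((red p n f a * b) - (a * b))"
    using J_mult[OF J_red[OF f, of p n a], of b] by (simp add: algebra_simps)
  then show ?thesis using red_eq_iff[OF f] by blast
qed

lemma red_mult_right: "okf f \<Longrightarrow> red p n f (a * red p n f b) = red p n f (a * b)"
  using red_mult_left[of f p n b a] by (simp add: mult.commute)

lemma Ocarr_coh: "okf f \<Longrightarrow> a \<in> Ocarr p f \<Longrightarrow> k \<le> n \<Longrightarrow> red p k f (a n) = a k"
proof (induction n)
  case 0 then show ?case unfolding Ocarr_def by auto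
next
  case (Suc n)
  show ?case
  proof (cases "k = Suc n")
    case True then show ?thesis using Suc unfolding Ocarr_def by auto
  next
    case False
    then have "k \<le> n" using Suc by auto
    have "red p k f (a (Suc n)) = red p k f (red p n f (a (Suc n)))"
      using red_red_le[OF Suc.prems(1) \<open>k \<le> n\<close>] by simp
    also have "\<dots> = red p k f (a n)" using Suc.prems(2) unfolding Ocarr_def by auto
    also have "\<dots> = a k" using Suc.IH[OF Suc.prems(1,2) \<open>k \<le> n\<close>] .
    finally show ?thesis .
  qed
qed

lemma Oone_carr: "okf f \<Longrightarrow> Oone p f \<in> Ocarr p f"
  unfolding Ocarr_def Oone_def using red_red_le[of f n "Suc n" p 1 for n] by auto

lemma Omult_carr: assumes f: "okf f" and that: "a \<in> Ocarr p f" "b \<in> Ocarr p f" shows "Omult p f a b \<in> Ocarr p f"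
proof -
  have "red p n f (red p (Suc n) f (a (Suc n) * b (Suc n))) = red p n f (a n * b n)" for n
  proof -
    have "red p n f (red p (Suc n) f (a (Suc n) * b (Suc n))) = red p n f (a (Suc n) * b (Suc n))"
      using red_red_le[OF f, of n "Suc n"] by simp
    also have "\<dots> = red p n f (red p n f (a (Suc n)) * red p n f (b (Suc n)))"
      using red_mult_left[OF f] red_mult_right[OF f] by metis
    also have "\<dots> = red p n f (a n * b n)" using that unfolding Ocarr_def by auto
    finally show ?thesis .
  qed
  then show ?thesis unfolding Ocarr_def Omult_def using f by auto
qed

lemma Oadd_carr: assumes f: "okf f" and that: "a \<in> Ocarr p f" "b \<in> Ocarr p f" shows "Oadd p f a b \<in> Ocarr p f"
proof -
  have "red p n f (red p (Suc n) f (a (Suc n) + b (Suc n))) = red p n f (a n + b n)" for n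
  proof -
    have "red p n f (red p (Suc n) f (a (Suc n) + b (Suc n))) = red p n f (a (Suc n) + b (Suc n))"
      using red_red_le[OF f, of n "Suc n"] by simp
    also have "\<dots> = red p n f (red p n f (a (Suc n)) + red p n f (b (Suc n)))"
      using red_add_left[OF f] red_add_right[OF f] by metis
    also have "\<dots> = red p n f (a n + b n)" using that unfolding Ocarr_def by auto
    finally show ?thesis .
  qed
  then show ?thesis unfolding Ocarr_def Oadd_def using f by auto
qed

lemma Omult_comm: "Omult p f a b = Omult p f b a"
  unfolding Omult_def by (simp add: mult.commute)

lemma Omult_assoc: "okf f \<Longrightarrow> Omult p f (Omult p f a b) c = Omult p f a (Omult p f b c)"
  unfolding Omult_def using red_mult_left red_mult_right by (simp add: mult.assoc)

lemma Omult_one: "okf f \<Longrightarrow> a \<in> Ocarr p f \<Longrightarrow> Omult p f (Oone p f) a = a"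
  unfolding Omult_def Oone_def using red_mult_left[of f p _ 1] unfolding Ocarr_def by auto

lemma Ounits_inv: "okf f \<Longrightarrow> a \<in> Ounits p f \<Longrightarrow> \<exists>b \<in> Ounits p f. Omult p f a b = Oone p f"
proof -
  assume "okf f" "a \<in> Ounits p f"
  then obtain b where b: "b \<in> Ocarr p f" "Omult p f a b = Oone p f" "a \<in> Ocarr p f" unfolding Ounits_def by blast
  then have "b \<in> Ounits p f" unfolding Ounits_def using Omult_comm[of p f b a] by auto
  then show ?thesis using b by blast
qed

lemma Ounits_mult: "okf f \<Longrightarrow> a \<in> Ounits p f \<Longrightarrow> b \<in> Ounits p f \<Longrightarrow> Omult p f a b \<in> Ounits p f"
proof -
  assume f: "okf f" and a: "a \<in> Ounits p f" and b: "b \<in> Ounits p f"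
  obtain a' where a': "a' \<in> Ocarr p f" "Omult p f a a' = Oone p f" using a unfolding Ounits_def by blast
  obtain b' where b': "b' \<in> Ocarr p f" "Omult p f b b' = Oone p f" using b unfolding Ounits_def by blast
  have ac: "a \<in> Ocarr p f" "b \<in> Ocarr p f" using a b unfolding Ounits_def by auto
  have "Omult p f (Omult p f a b) (Omult p f a' b') = Omult p f (Omult p f a a') (Omult p f b b')"
    using Omult_assoc[OF f] Omult_comm by metis
  also have "\<dots> = Oone p f" using a' b' Omult_one[OF f Oone_carr[OF f]] by simp
  finally show ?thesis unfolding Ounits_def using Omult_carr[OF f] ac a' b' by blast
qed

lemma Oone_unit: "okf f \<Longrightarrow> Oone p f \<in> Ounits p f"
  unfolding Ounits_def using Oone_carr Omult_one by blast



definition okfs :: "int poly list \<Rightarrow> bool" where "okfs fs \<longleftrightarrow> (\<forall>f\<in>set fs. okf f)"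

lemma okfs_nth: "okfs fs \<Longrightarrow> i < length fs \<Longrightarrow> okf (fs ! i)"
  unfolding okfs_def by auto

definition Te :: "nat \<Rightarrow> int poly list \<Rightarrow> nat \<Rightarrow> nat \<Rightarrow> int poly" where
  "Te p fs = (\<lambda>i. if i < length fs then Oone p (fs ! i) else Ozero)"

lemma Te_in: "okfs fs \<Longrightarrow> Te p fs \<in> Tzero p fs"
  unfolding Tzero_def Te_def using Oone_unit okfs_nth by auto

lemma Tmult_in: "okfs fs \<Longrightarrow> s \<in> Tzero p fs \<Longrightarrow> t \<in> Tzero p fs \<Longrightarrow> Tmult p fs s t \<in> Tzero p fs"
  unfolding Tzero_def Tmult_def using Ounits_mult okfs_nth by auto

lemma Tmult_comm: "Tmult p fs s t = Tmult p fs t s"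
  unfolding Tmult_def using Omult_comm by metis

lemma Tmult_assoc: "okfs fs \<Longrightarrow> Tmult p fs (Tmult p fs a b) c = Tmult p fs a (Tmult p fs b c)"
proof
  fix i
  assume fs: "okfs fs"
  show "Tmult p fs (Tmult p fs a b) c i = Tmult p fs a (Tmult p fs b c) i"
    using Omult_assoc[OF okfs_nth[OF fs]] unfolding Tmult_def by simp
qed

lemma Tmult_e: "okfs fs \<Longrightarrow> t \<in> Tzero p fs \<Longrightarrow> Tmult p fs (Te p fs) t = t"
proof
  fix i
  assume fs: "okfs fs" and t: "t \<in> Tzero p fs"
  show "Tmult p fs (Te p fs) t i = t i"
  proof (cases "i < length fs")
    case True
    then have "t i \<in> Ocarr p (fs ! i)" using t unfolding Tzero_def Ounits_def by auto
    then show ?thesis using True Omult_one[OF okfs_nth[OF fs True]] unfolding Tmult_def Te_def by simp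
  next
    case False then show ?thesis using t unfolding Tmult_def Tzero_def by auto
  qed
qed

lemma Tinv: assumes fs: "okfs fs" and t: "t \<in> Tzero p fs" shows "\<exists>b\<in>Tzero p fs. Tmult p fs t b = Te p fs"
proof -
  define P where "P = (\<lambda>i c. c \<in> Ounits p (fs ! i) \<and> Omult p (fs ! i) (t i) c = Oone p (fs ! i))"
  define b where "b = (\<lambda>i. if i < length fs then (SOME c. P i c) else Ozero)"
  have c: "P i (b i)" if i: "i < length fs" for i
  proof -
    have "t i \<in> Ounits p (fs ! i)" using t i unfolding Tzero_def by auto
    then have "\<exists>c. P i c" unfolding P_def using Ounits_inv[OF okfs_nth[OF fs i]] by blast
    then have "P i (SOME c. P i c)" by (rule someI_ex)
    then show ?thesis unfolding b_def using i by simp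
  qed
  have "b \<in> Tzero p fs" unfolding Tzero_def using c unfolding P_def by (auto simp: b_def)
  moreover have "Tmult p fs t b = Te p fs"
  proof
    fix i show "Tmult p fs t b i = Te p fs i"
      using c[of i] unfolding P_def Tmult_def Te_def by auto
  qed
  ultimately show ?thesis by blast
qed

lemma Tmult_level: "i < length fs \<Longrightarrow> Tmult p fs s t i n = red p n (fs ! i) (s i n * t i n)"
  unfolding Tmult_def Omult_def by simp

lemma kappa_e:
  assumes "okfs fs" "cont_character p fs N \<kappa>"
  shows "\<kappa> (Te p fs) = 1"
proof -
  have e: "Te p fs \<in> Tzero p fs" using Te_in[OF assms(1)] .
  obtain u where u: "\<kappa> (Te p fs) * u = 1" using assms(2) e unfolding cont_character_def by blast
  have "\<kappa> (Te p fs) = \<kappa> (Te p fs) * \<kappa> (Te p fs)"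
    using assms(2) e Tmult_e[OF assms(1) e] unfolding cont_character_def by metis
  then have "\<kappa> (Te p fs) * u = \<kappa> (Te p fs) * \<kappa> (Te p fs) * u" by simp
  then show ?thesis using u by (simp add: mult.assoc)
qed

definition tpow :: "nat \<Rightarrow> int poly list \<Rightarrow> (nat \<Rightarrow> nat \<Rightarrow> int poly) \<Rightarrow> nat \<Rightarrow> (nat \<Rightarrow> nat \<Rightarrow> int poly)" where
  "tpow p fs t k = (Tmult p fs t ^^ k) (Te p fs)"

lemma tpow_Suc: "tpow p fs t (Suc k) = Tmult p fs t (tpow p fs t k)"
  unfolding tpow_def by simp

lemma tpow_in: "okfs fs \<Longrightarrow> t \<in> Tzero p fs \<Longrightarrow> tpow p fs t k \<in> Tzero p fs"
  by (induction k) (auto simp: tpow_Suc Tmult_in, simp add: tpow_def Te_in)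

lemma kappa_tpow:
  assumes "okfs fs" "cont_character p fs N \<kappa>" "t \<in> Tzero p fs"
  shows "\<kappa> (tpow p fs t k) = \<kappa> t ^ k"
proof (induction k)
  case 0 then show ?case using kappa_e[OF assms(1,2)] by (simp add: tpow_def)
next
  case (Suc k)
  have "\<kappa> (tpow p fs t (Suc k)) = \<kappa> t * \<kappa> (tpow p fs t k)"
    unfolding tpow_Suc using assms tpow_in[OF assms(1,3)] unfolding cont_character_def by blast
  then show ?case using Suc by simp
qed

lemma tpow_level: "okfs fs \<Longrightarrow> i < length fs \<Longrightarrow> tpow p fs t k i n = red p n (fs ! i) ((t i n) ^ k)"
proof (induction k)
  case 0 then show ?case by (simp add: tpow_def Te_def Oone_def)
next
  case (Suc k)
  then show ?case unfolding tpow_Suc Tmult_level[OF Suc.prems(2)]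
    using red_mult_right[OF okfs_nth[OF Suc.prems]] by simp
qed

lemma J_pow1: "J p k f y \<Longrightarrow> J p k f ((1 + y) ^ i - 1)"
proof -
  assume y: "J p k f y"
  have "(1 + y) ^ i - 1 ^ i = ((1 + y) - 1) * (\<Sum>j<i. 1 ^ (i - Suc j) * (1 + y) ^ j)"
    by (rule power_diff_sumr2)
  then have "(1 + y) ^ i - 1 = (\<Sum>j<i. (1 + y) ^ j) * y" by (simp add: mult.commute)
  then show ?thesis using J_mult[OF y] by simp
qed

lemma J_p_step:
  assumes y: "J p k f y" and k: "k \<ge> 1"
  shows "J p (Suc k) f ((1 + y) ^ p - 1)"
proof -
  have "(1 + y) ^ p - 1 ^ p = ((1 + y) - 1) * (\<Sum>j<p. 1 ^ (p - Suc j) * (1 + y) ^ j)"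
    by (rule power_diff_sumr2)
  then have e1: "(1 + y) ^ p - 1 = y * (\<Sum>j<p. (1 + y) ^ j)" by simp
  have "(\<Sum>j<p. (1 + y) ^ j) = (\<Sum>j<p. ((1 + y) ^ j - 1)) + of_nat p"
    by (simp add: sum_subtractf)
  then have e2: "(1 + y) ^ p - 1 = y * (\<Sum>j<p. ((1 + y) ^ j - 1)) + of_nat p * y"
    using e1 by (simp add: algebra_simps)
  have s: "J p k f (\<Sum>j<n. ((1 + y) ^ j - 1))" for n
    by (induction n) (auto intro: J_add J_pow1[OF y])
  have a: "J p (Suc k) f (y * (\<Sum>j<p. ((1 + y) ^ j - 1)))"
    using J_mono[OF _ J_mult2[OF y s[of p]]] k by simp
  obtain q z where qz: "y = f * q + smult (int p ^ k) z" using y unfolding J_def by blast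
  have "of_nat p * y = f * (of_nat p * q) + smult (int p ^ Suc k) z"
    unfolding qz by (simp add: algebra_simps of_nat_poly smult_smult)
  then have b: "J p (Suc k) f (of_nat p * y)" unfolding J_def by blast
  show ?thesis unfolding e2 using J_add[OF a b] .
qed

lemma J_pm:
  assumes y: "J p k f y" and k: "k \<ge> 1"
  shows "J p (k + m) f ((1 + y) ^ (p ^ m) - 1)"
proof (induction m)
  case 0 then show ?case using y by simp
next
  case (Suc m)
  have "(1 + y) ^ (p ^ Suc m) = (1 + ((1 + y) ^ (p ^ m) - 1)) ^ p"
    by (simp add: power_mult[symmetric] mult.commute)
  then show ?case using J_p_step[OF Suc] k by simp
qed

lemma tpow_ker:
  assumes fs: "okfs fs" and t: "t \<in> Tker p fs k" and k: "k \<ge> 1"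
  shows "tpow p fs t (p ^ m) \<in> Tker p fs (k + m)"
proof -
  have tz: "t \<in> Tzero p fs" using t unfolding Tker_def by auto
  have "tpow p fs t (p ^ m) i (k + m) = Oone p (fs ! i) (k + m)" if i: "i < length fs" for i
  proof -
    let ?f = "fs ! i"
    have f: "okf ?f" using okfs_nth[OF fs i] .
    have ti: "t i \<in> Ocarr p ?f" using tz i unfolding Tzero_def Ounits_def by auto
    have "red p k ?f (t i (k + m)) = t i k" using Ocarr_coh[OF f ti] by simp
    also have "\<dots> = red p k ?f 1" using t i unfolding Tker_def Oone_def by auto
    finally have "J p k ?f (t i (k + m) - 1)" using red_eq_iff[OF f] by blast
    then have "J p (k + m) ?f ((1 + (t i (k + m) - 1)) ^ (p ^ m) - 1)" using J_pm k by blast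
    then have "red p (k + m) ?f ((t i (k + m)) ^ (p ^ m)) = red p (k + m) ?f 1"
      using red_eq_iff[OF f] by simp
    then show ?thesis using tpow_level[OF fs i] unfolding Oone_def by simp
  qed
  then show ?thesis unfolding Tker_def using tpow_in[OF fs tz] by auto
qed



lemma pseudo_mod_small:
  assumes f: "okf f" and r: "degree r < degree f"
  shows "pseudo_mod r f = r"
proof -
  have f1: "lead_coeff f = 1" "degree f \<ge> 1" using f unfolding okf_def by auto
  obtain q r' where qr: "r = f * q + r'" and d: "degree r' < degree f" and r': "r' = pseudo_mod r f"
    using pm_monic'[OF f1] by blast
  have eq: "f * q = r - r'" using qr by simp
  have "degree (r - r') < degree f" using r d degree_diff_less by blast
  have "q = 0"
  proof (rule ccontr)
    assume "q \<noteq> 0"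
    moreover have "f \<noteq> 0" using f1 by auto
    ultimately have "degree (f * q) = degree f + degree q" by (simp add: degree_mult_eq)
    then show False using \<open>degree (r - r') < degree f\<close> unfolding eq by simp
  qed
  then show ?thesis using qr r' by simp
qed

lemma red_zero: "okf f \<Longrightarrow> red p n f 0 = 0"
  unfolding red_def using pseudo_mod_small[of f 0] unfolding okf_def by simp

lemma red_fixed_finite:
  assumes f: "okf f" and p: "p > 0"
  shows "finite {g. red p n f g = g}"
proof -
  define d where "d = degree f"
  define P where "P = int p ^ n"
  have P: "P > 0" using p unfolding P_def by simp
  define S where "S = {g :: int poly. degree g < d \<and> (\<forall>i. coeff g i \<in> {0..<P})}"
  have sub: "{g. red p n f g = g} \<subseteq> S"
  proof
    fix g assume "g \<in> {g. red p n f g = g}"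
    then have g: "g = map_poly (\<lambda>c. c mod P) (pseudo_mod g f)" unfolding red_def P_def by simp
    have f1: "lead_coeff f = 1" "degree f \<ge> 1" using f unfolding okf_def by auto
    have "degree (pseudo_mod g f) < d" using pm_monic(2)[OF f1(1), of g] f1(2) unfolding d_def by auto
    then have "degree g < d" using g map_poly_degree_leq[of "\<lambda>c. c mod P" "pseudo_mod g f"] by simp
    moreover have "coeff g i \<in> {0..<P}" for i
      using P by (subst g) (simp add: coeff_map_poly)
    ultimately show "g \<in> S" unfolding S_def by blast
  qed
  have inj: "inj_on (\<lambda>g. map (coeff g) [0..<d]) S"
  proof (rule inj_onI)
    fix g h assume g: "g \<in> S" and h: "h \<in> S" and e: "map (coeff g) [0..<d] = map (coeff h) [0..<d]"
    show "g = h"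
    proof (rule poly_eqI)
      fix i
      show "coeff g i = coeff h i"
      proof (cases "i < d")
        case True then show ?thesis using e by (metis diff_zero length_upt nth_map nth_upt add_0 length_map)
      next
        case False then show ?thesis using g h unfolding S_def by (simp add: coeff_eq_0)
      qed
    qed
  qed
  have "(\<lambda>g. map (coeff g) [0..<d]) ` S \<subseteq> {xs. set xs \<subseteq> {0..<P} \<and> length xs = d}"
    unfolding S_def by auto
  moreover have "finite {xs. set xs \<subseteq> {0..<P} \<and> length xs = d}"
    by (rule finite_lists_length_eq) simp
  ultimately have "finite ((\<lambda>g. map (coeff g) [0..<d]) ` S)" by (rule finite_subset)
  then have "finite S" using inj finite_imageD by blast
  then show ?thesis using sub finite_subset by blast
qed

definition cl :: "nat \<Rightarrow> int poly list \<Rightarrow> (nat \<Rightarrow> nat \<Rightarrow> int poly) \<Rightarrow> int poly list" where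
  "cl n fs t = map (\<lambda>i. t i n) [0..<length fs]"

lemma cl_finite:
  assumes fs: "okfs fs" and p: "p > 0"
  shows "finite (cl n fs ` Tzero p fs)"
proof -
  define U where "U = (\<Union>i<length fs. {g. red p n (fs ! i) g = g})"
  have U: "finite U" unfolding U_def using red_fixed_finite[OF okfs_nth[OF fs] p] by auto
  have "cl n fs ` Tzero p fs \<subseteq> {xs. set xs \<subseteq> U \<and> length xs = length fs}"
  proof
    fix xs assume "xs \<in> cl n fs ` Tzero p fs"
    then obtain t where t: "t \<in> Tzero p fs" and xs: "xs = cl n fs t" by blast
    have "t i n \<in> U" if "i < length fs" for i
    proof -
      have "t i \<in> Ocarr p (fs ! i)" using t that unfolding Tzero_def Ounits_def by auto
      then have "red p n (fs ! i) (t i n) = t i n" unfolding Ocarr_def by auto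
      then show ?thesis unfolding U_def using that by blast
    qed
    then show "xs \<in> {xs. set xs \<subseteq> U \<and> length xs = length fs}" unfolding xs cl_def by auto
  qed
  moreover have "finite {xs. set xs \<subseteq> U \<and> length xs = length fs}"
    by (rule finite_lists_length_eq[OF U])
  ultimately show ?thesis by (rule finite_subset)
qed

lemma cl_eq: "cl n fs s = cl n fs t \<Longrightarrow> i < length fs \<Longrightarrow> s i n = t i n"
  unfolding cl_def by (metis (no_types, lifting) add_0 diff_zero length_upt nth_map nth_upt)

abbreviation X1 :: "int poly" where "X1 \<equiv> [:0, 1:]"

lemma okf_X: "okf X1" unfolding okf_def by simp

definition Kc :: "nat \<Rightarrow> nat \<Rightarrow> nat \<Rightarrow> int poly" where
  "Kc p k = (\<lambda>n. red p n X1 (of_nat k))"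

lemma Kc_carr: "Kc p k \<in> Zp p"
  unfolding Ocarr_def Kc_def using red_red_le[OF okf_X] by auto

lemma Kc_add: "Oadd p X1 (Kc p k) (Kc p 1) = Kc p (Suc k)"
  unfolding Oadd_def Kc_def using red_add_left[OF okf_X] red_add_right[OF okf_X]
  by (simp add: add.commute)

lemma Kc_one: "Kc p 1 = Oone p X1" unfolding Kc_def Oone_def by simp

lemma phi_Kc:
  assumes "zp_alg_map p N \<phi>"
  shows "\<phi> (Kc p k) = of_nat k"
proof (induction k)
  case 0
  have "Oadd p X1 (Kc p 0) (Kc p 0) = Kc p 0"
    unfolding Oadd_def Kc_def using red_zero[OF okf_X] by simp
  then have "\<phi> (Kc p 0) = \<phi> (Kc p 0) + \<phi> (Kc p 0)"
    using assms Kc_carr unfolding zp_alg_map_def by metis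
  then show ?case by simp
next
  case (Suc k)
  have "\<phi> (Kc p (Suc k)) = \<phi> (Kc p k) + \<phi> (Kc p 1)"
    using assms Kc_carr Kc_add unfolding zp_alg_map_def by metis
  also have "\<phi> (Kc p 1) = 1" using assms Kc_one unfolding zp_alg_map_def by simp
  finally show ?case using Suc by simp
qed

lemma norm_p:
  assumes "zp_alg_map p N \<phi>"
  shows "N (of_nat p) \<le> 1 / real p"
proof -
  have "J p 1 X1 (of_nat p - 0)"
  proof -
    have "(of_nat p :: int poly) - 0 = X1 * 0 + smult (int p ^ 1) 1"
      by (simp add: of_nat_poly)
    then show ?thesis unfolding J_def by blast
  qed
  then have "Kc p p 1 = 0" unfolding Kc_def using red_eq_iff[OF okf_X] red_zero[OF okf_X] by metis
  then have "N (\<phi> (Kc p p)) \<le> (1 / real p) ^ 1" using assms Kc_carr unfolding zp_alg_map_def by blast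
  then show ?thesis using phi_Kc[OF assms] by simp
qed



lemma na_norm_facts:
  assumes "is_na_norm N"
  shows "\<And>x. 0 \<le> N x" "\<And>x. N x = 0 \<longleftrightarrow> x = 0" "\<And>x y. N (x + y) \<le> max (N x) (N y)"
    "\<And>x. N (- x) = N x" "\<And>x y. N (x * y) \<le> N x * N y" "N 1 = 1"
  using assms unfolding is_na_norm_def by auto

lemma one_neq_zero_norm: "is_na_norm (N :: 'r::comm_ring_1 \<Rightarrow> real) \<Longrightarrow> (1::'r) \<noteq> 0"
  using na_norm_facts(2,6) by force

lemma renorm:
  fixes N :: "'r::comm_ring_1 \<Rightarrow> real" and W :: "('r \<times> real) set"
  assumes nn: "is_na_norm N"
    and W1: "(1, 1) \<in> W"
    and Wmul: "\<And>m a m' a'. (m, a) \<in> W \<Longrightarrow> (m', a') \<in> W \<Longrightarrow> (m * m', a * a') \<in> W"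
    and Wpos: "\<And>m a. (m, a) \<in> W \<Longrightarrow> a > 0"
    and Wb: "\<And>m a. (m, a) \<in> W \<Longrightarrow> N m * a \<le> C"
    and wmul: "\<And>y. N (w * y) = N w * N y" and wpos: "N w > 0"
  shows "\<exists>N2. is_na_norm N2 \<and> (\<forall>y. N2 y \<le> N y) \<and> (\<forall>y. N y \<le> C * N2 y) \<and>
     (\<forall>m a. (m, a) \<in> W \<longrightarrow> N2 m * a \<le> 1) \<and> (\<forall>y. N2 (w * y) = N w * N2 y)"
proof -
  note F = na_norm_facts[OF nn]
  have C1: "C \<ge> 1" using Wb[OF W1] F(6) by simp
  have one0: "(1::'r) \<noteq> 0" using one_neq_zero_norm[OF nn] .
  define g where "g = (\<lambda>y (ma :: 'r \<times> real). N (fst ma * y) * snd ma)"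
  define N1 where "N1 = (\<lambda>y. SUP ma\<in>W. g y ma)"
  have Wne: "W \<noteq> {}" using W1 by blast
  have gb: "g y ma \<le> C * N y" if "ma \<in> W" for y ma
  proof -
    obtain m a where ma: "ma = (m, a)" by force
    have a: "a > 0" using Wpos that ma by blast
    have "g y ma = N (m * y) * a" unfolding g_def ma by simp
    also have "\<dots> \<le> N m * N y * a" using F(5) a by (simp add: mult_right_mono)
    also have "\<dots> = (N m * a) * N y" by simp
    also have "\<dots> \<le> C * N y" using Wb that ma F(1) by (simp add: mult_right_mono)
    finally show ?thesis .
  qed
  have bdd: "bdd_above (g y ` W)" for y using gb by (intro bdd_aboveI2) auto
  have N1_ub: "g y ma \<le> N1 y" if "ma \<in> W" for y ma
    unfolding N1_def using cSUP_upper[OF that bdd] .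
  have N1_le: "N1 y \<le> M" if "\<And>ma. ma \<in> W \<Longrightarrow> g y ma \<le> M" for y M
    unfolding N1_def using cSUP_least[OF Wne] that by blast
  have N1_lo: "N y \<le> N1 y" for y using N1_ub[OF W1, of y] unfolding g_def by simp
  have N1_hi: "N1 y \<le> C * N y" for y using N1_le gb by blast
  have N1_nn: "N1 y \<ge> 0" for y using N1_lo F(1) order.trans by blast
  have N1_mult: "N1 (y * z) \<le> N y * N1 z" for y z
  proof (rule N1_le)
    fix ma assume ma: "ma \<in> W"
    have "g (y * z) ma = N (y * (fst ma * z)) * snd ma" unfolding g_def by (simp add: algebra_simps)
    also have "\<dots> \<le> N y * N (fst ma * z) * snd ma"
      using F(5) Wpos[of "fst ma" "snd ma"] ma by (simp add: mult_right_mono)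
    also have "\<dots> = N y * g z ma" unfolding g_def by simp
    also have "\<dots> \<le> N y * N1 z" using N1_ub[OF ma] F(1) by (simp add: mult_left_mono)
    finally show "g (y * z) ma \<le> N y * N1 z" .
  qed
  have N1_W: "N1 (m0 * y) * a0 \<le> N1 y" if W0: "(m0, a0) \<in> W" for m0 a0 y
  proof -
    have a0: "a0 > 0" using Wpos W0 .
    have "N1 (m0 * y) \<le> N1 y / a0"
    proof (rule N1_le)
      fix ma assume ma: "ma \<in> W"
      obtain m a where mae: "ma = (m, a)" by force
      have "(m * m0, a * a0) \<in> W" using Wmul ma W0 mae by blast
      then have "g y (m * m0, a * a0) \<le> N1 y" by (rule N1_ub)
      then have "N (m * m0 * y) * a * a0 \<le> N1 y" unfolding g_def by (simp add: mult.assoc)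
      then show "g (m0 * y) ma \<le> N1 y / a0" unfolding g_def mae using a0
        by (simp add: field_simps mult.assoc)
    qed
    then show ?thesis using a0 by (simp add: field_simps)
  qed
  have N1_add: "N1 (y + z) \<le> max (N1 y) (N1 z)" for y z
  proof (rule N1_le)
    fix ma assume ma: "ma \<in> W"
    have a: "snd ma > 0" using Wpos[of "fst ma" "snd ma"] ma by simp
    have "g (y + z) ma = N (fst ma * y + fst ma * z) * snd ma" unfolding g_def by (simp add: algebra_simps)
    also have "\<dots> \<le> max (N (fst ma * y)) (N (fst ma * z)) * snd ma"
      using F(3) a by (simp add: mult_right_mono)
    also have "\<dots> = max (g y ma) (g z ma)" unfolding g_def using a by (simp add: max_mult_distrib_right)
    also have "\<dots> \<le> max (N1 y) (N1 z)" using N1_ub[OF ma, of y] N1_ub[OF ma, of z] by (rule max.mono)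
    finally show "g (y + z) ma \<le> max (N1 y) (N1 z)" .
  qed
  have N1_neg: "N1 (- y) = N1 y" for y
  proof -
    have "g (- y) = g y" unfolding g_def using F(4) by (metis mult_minus_right)
    then show ?thesis unfolding N1_def by simp
  qed
  have N1_w: "N1 (w * y) = N w * N1 y" for y
  proof (rule antisym)
    show "N1 (w * y) \<le> N w * N1 y" using N1_mult .
    have "N1 y \<le> N1 (w * y) / N w"
    proof (rule N1_le)
      fix ma assume ma: "ma \<in> W"
      have "g (w * y) ma = N w * g y ma" unfolding g_def by (simp add: mult.left_commute wmul)
      then have "N w * g y ma \<le> N1 (w * y)" using N1_ub[OF ma, of "w * y"] by simp
      then show "g y ma \<le> N1 (w * y) / N w" using wpos by (simp add: field_simps)
    qed
    then show "N w * N1 y \<le> N1 (w * y)" using wpos by (simp add: field_simps)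
  qed
  have N1_pos: "N1 z > 0" if "z \<noteq> 0" for z using N1_lo[of z] F(2)[of z] F(1)[of z] that by simp
  define h where "h = (\<lambda>y z. N1 (y * z) / N1 z)"
  define N2 where "N2 = (\<lambda>y. SUP z\<in>-{0}. h y z)"
  have Zne: "- {0} \<noteq> ({} :: 'r set)" using one0 by blast
  have hb: "h y z \<le> N y" if "z \<in> - {0}" for y z
  proof -
    have "N1 z > 0" using N1_pos that by blast
    then show ?thesis unfolding h_def using N1_mult[of y z] by (simp add: field_simps)
  qed
  have bdd2: "bdd_above (h y ` (- {0}))" for y using hb by (intro bdd_aboveI2) auto
  have N2_ub: "h y z \<le> N2 y" if "z \<noteq> 0" for y z
    unfolding N2_def using cSUP_upper[OF _ bdd2] that by blast
  have N2_le: "N2 y \<le> M" if "\<And>z. z \<noteq> 0 \<Longrightarrow> h y z \<le> M" for y M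
    unfolding N2_def using cSUP_least[OF Zne] that by blast
  have h_nn: "h y z \<ge> 0" for y z unfolding h_def using N1_nn by simp
  have N2_nn: "N2 y \<ge> 0" for y using N2_ub[OF one0, of y] h_nn[of y 1] by linarith
  have N2_hi: "N2 y \<le> N y" for y using N2_le hb by blast
  have N2_lo: "N y \<le> C * N2 y" for y
  proof -
    have "N1 1 > 0" using N1_pos one0 by blast
    have "h y 1 = N1 y / N1 1" unfolding h_def by simp
    also have "\<dots> \<ge> N y / (C * N 1)"
    proof -
      have "N1 1 \<le> C * N 1" by (rule N1_hi)
      then have "N1 y / N1 1 \<ge> N1 y / (C * N 1)" using \<open>N1 1 > 0\<close> N1_nn
        by (simp add: frac_le)
      moreover have "N1 y / (C * N 1) \<ge> N y / (C * N 1)" using N1_lo C1 F(6)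
        by (simp add: divide_right_mono)
      ultimately show ?thesis by linarith
    qed
    finally have "N y / C \<le> N2 y" using N2_ub[OF one0, of y] F(6) by simp
    then show ?thesis using C1 by (simp add: field_simps)
  qed
  have isn: "is_na_norm N2"
    unfolding is_na_norm_def
  proof (intro conjI allI)
    fix x show "0 \<le> N2 x" by (rule N2_nn)
  next
    fix x show "N2 x = 0 \<longleftrightarrow> x = 0"
    proof
      assume "N2 x = 0" then have "N x \<le> 0" using N2_lo[of x] by simp
      then show "x = 0" using F(1)[of x] F(2)[of x] by simp
    next
      assume "x = 0" then have "N2 x \<le> 0" using N2_hi[of x] F(2)[of 0] by simp
      then show "N2 x = 0" using N2_nn[of x] by simp
    qed
  next
    fix x y show "N2 (x + y) \<le> max (N2 x) (N2 y)"
    proof (rule N2_le)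
      fix z :: 'r assume z: "z \<noteq> 0"
      have "h (x + y) z = N1 (x * z + y * z) / N1 z" unfolding h_def by (simp add: algebra_simps)
      also have "\<dots> \<le> max (N1 (x * z)) (N1 (y * z)) / N1 z"
        using N1_add N1_pos[OF z] by (simp add: divide_right_mono)
      also have "\<dots> = max (h x z) (h y z)" unfolding h_def using N1_pos[OF z]
        by (simp add: max_divide_distrib_right)
      also have "\<dots> \<le> max (N2 x) (N2 y)" using N2_ub[OF z] by (meson max.mono)
      finally show "h (x + y) z \<le> max (N2 x) (N2 y)" .
    qed
  next
    fix x show "N2 (- x) = N2 x" unfolding N2_def h_def using N1_neg by (metis mult_minus_left)
  next
    fix x y show "N2 (x * y) \<le> N2 x * N2 y"
    proof (rule N2_le)
      fix z :: 'r assume z: "z \<noteq> 0"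
      show "h (x * y) z \<le> N2 x * N2 y"
      proof (cases "y * z = 0")
        case True
        have "N1 (x * y * z) \<le> 0" using N1_hi[of "x * y * z"] True F(2)[of 0] by (simp add: mult.assoc)
        then have "h (x * y) z \<le> 0" unfolding h_def using N1_pos[OF z] by (simp add: divide_nonpos_pos)
        then show ?thesis using N2_nn[of x] N2_nn[of y] by (meson mult_nonneg_nonneg order.trans)
      next
        case False
        have "h (x * y) z = h x (y * z) * h y z" unfolding h_def using N1_pos[OF False]
          by (simp add: mult.assoc)
        also have "\<dots> \<le> N2 x * N2 y"
          using N2_ub[OF False, of x] N2_ub[OF z, of y] h_nn N2_nn by (simp add: mult_mono)
        finally show ?thesis .
      qed
    qed
  next
    show "N2 1 = 1"
    proof (rule antisym)
      show "N2 1 \<le> 1" using N2_hi[of 1] F(6) by simp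
      have "h 1 1 = 1" unfolding h_def using N1_pos[OF one0] by simp
      then show "1 \<le> N2 1" using N2_ub[OF one0, of 1] by simp
    qed
  qed
  have N2_W: "N2 m * a \<le> 1" if W0: "(m, a) \<in> W" for m a
  proof -
    have a: "a > 0" using Wpos W0 .
    have "N2 m \<le> 1 / a"
    proof (rule N2_le)
      fix z :: 'r assume z: "z \<noteq> 0"
      have "N1 (m * z) * a \<le> N1 z" by (rule N1_W[OF W0])
      then show "h m z \<le> 1 / a" unfolding h_def using N1_pos[OF z] a by (simp add: field_simps)
    qed
    then show ?thesis using a by (simp add: field_simps)
  qed
  have N2_w: "N2 (w * y) = N w * N2 y" for y
  proof (rule antisym)
    show "N2 (w * y) \<le> N w * N2 y"
    proof (rule N2_le)
      fix z :: 'r assume z: "z \<noteq> 0"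
      have "h (w * y) z = N w * h y z" unfolding h_def using N1_w by (simp add: mult.assoc)
      then show "h (w * y) z \<le> N w * N2 y" using N2_ub[OF z] wpos by (simp add: mult_left_mono)
    qed
    have "N2 y \<le> N2 (w * y) / N w"
    proof (rule N2_le)
      fix z :: 'r assume z: "z \<noteq> 0"
      have "h (w * y) z = N w * h y z" unfolding h_def using N1_w by (simp add: mult.assoc)
      then show "h y z \<le> N2 (w * y) / N w" using N2_ub[OF z, of "w * y"] wpos by (simp add: field_simps)
    qed
    then show "N w * N2 y \<le> N2 (w * y)" using wpos by (simp add: field_simps)
  qed
  show ?thesis using isn N2_hi N2_lo N2_W N2_w by blast
qed



lemma N_of_nat_le1: "is_na_norm N \<Longrightarrow> N (of_nat c) \<le> 1"
proof (induction c)
  case 0 then show ?case using na_norm_facts(2)[OF 0, of 0] by simp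
next
  case (Suc c)
  then have "N (of_nat c + 1) \<le> max (N (of_nat c)) (N 1)" using na_norm_facts(3) by blast
  then show ?case using Suc na_norm_facts(6)[OF Suc.prems] by (simp add: add.commute)
qed

lemma N_sum_le: "is_na_norm N \<Longrightarrow> M \<ge> 0 \<Longrightarrow> (\<And>i. i \<in> A \<Longrightarrow> N (f i) \<le> M) \<Longrightarrow> N (sum f A) \<le> M"
proof (induction A rule: infinite_finite_induct)
  case (infinite A) then show ?case using na_norm_facts(2)[OF infinite.prems(1), of 0] by simp
next
  case empty then show ?case using na_norm_facts(2)[OF empty.prems(1), of 0] by simp
next
  case (insert x F)
  have "N (sum f (insert x F)) = N (f x + sum f F)" using insert.hyps by simp
  also have "\<dots> \<le> max (N (f x)) (N (sum f F))" using na_norm_facts(3)[OF insert.prems(1)] by blast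
  also have "\<dots> \<le> M" using insert by simp
  finally show ?case .
qed

lemma N_pow_le1: "is_na_norm N \<Longrightarrow> N x \<le> 1 \<Longrightarrow> N (x ^ k) \<le> 1"
proof (induction k)
  case 0 then show ?case by (simp add: is_na_norm_def)
next
  case (Suc k)
  have "N (x ^ Suc k) \<le> N x * N (x ^ k)" using na_norm_facts(5)[OF Suc.prems(1)] by simp
  also have "\<dots> \<le> 1" using Suc na_norm_facts(1)[OF Suc.prems(1)] by (simp add: mult_le_one)
  finally show ?case .
qed

lemma N_diff_le1: "is_na_norm N \<Longrightarrow> N x \<le> 1 \<Longrightarrow> N (x - 1) \<le> 1"
  using na_norm_facts(3)[of N x "-1"] na_norm_facts(4)[of N 1] na_norm_facts(6)[of N] by simp

lemma N_add_le1: "is_na_norm N \<Longrightarrow> N x \<le> 1 \<Longrightarrow> N y \<le> 1 \<Longrightarrow> N (x + y) \<le> 1"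
  using na_norm_facts(3)[of N x y] by simp

lemma frob_step:
  fixes N :: "'r::comm_ring_1 \<Rightarrow> real"
  assumes nn: "is_na_norm N" and p: "prime p" and P: "N (of_nat p) \<le> P" and y: "N y \<le> 1"
  shows "\<exists>b. y ^ p = ((1 + y) ^ p - 1) + b \<and> N b \<le> P"
proof -
  note F = na_norm_facts[OF nn]
  have p2: "p \<ge> 2" using p by (simp add: prime_ge_2_nat)
  define b where "b = - (\<Sum>k\<in>{1..<p}. of_nat (p choose k) * y ^ k)"
  have "(y + 1) ^ p = (\<Sum>k\<le>p. of_nat (p choose k) * y ^ k * 1 ^ (p - k))" by (rule binomial_ring)
  also have "\<dots> = (\<Sum>k\<le>p. of_nat (p choose k) * y ^ k)" by simp
  also have "{..p} = insert 0 (insert p {1..<p})" using p2 by auto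
  also have "(\<Sum>k\<in>insert 0 (insert p {1..<p}). of_nat (p choose k) * y ^ k) =
      1 + (y ^ p + (\<Sum>k\<in>{1..<p}. of_nat (p choose k) * y ^ k))"
    using p2 by (simp add: sum.insert)
  finally have e: "(y + 1) ^ p = 1 + (y ^ p + (\<Sum>k\<in>{1..<p}. of_nat (p choose k) * y ^ k))" .
  have "y ^ p = ((1 + y) ^ p - 1) + b" unfolding b_def using e by (simp add: algebra_simps)
  moreover have "N b \<le> P"
  proof -
    have P0: "P \<ge> 0" using P F(1) order.trans by blast
    have "N (of_nat (p choose k) * y ^ k) \<le> P" if k: "k \<in> {1..<p}" for k
    proof -
      have "p dvd (p choose k)" using dvd_choose_prime[of k p] k p by auto
      then obtain c where c: "p choose k = p * c" by blast
      have "N (of_nat (p choose k) * y ^ k) = N (of_nat p * (of_nat c * y ^ k))"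
        unfolding c by (simp add: mult.assoc)
      also have "\<dots> \<le> N (of_nat p) * N (of_nat c * y ^ k)" by (rule F(5))
      also have "\<dots> \<le> P * 1"
      proof (rule mult_mono[OF P])
        have "N (of_nat c * y ^ k) \<le> N (of_nat c) * N (y ^ k)" by (rule F(5))
        also have "\<dots> \<le> 1" using N_of_nat_le1[OF nn] N_pow_le1[OF nn y] F(1) by (simp add: mult_le_one)
        finally show "N (of_nat c * y ^ k) \<le> 1" .
      qed (use P0 F(1) in auto)
      finally show ?thesis by simp
    qed
    then have "N (\<Sum>k\<in>{1..<p}. of_nat (p choose k) * y ^ k) \<le> P"
      by (intro N_sum_le[OF nn P0])
    then show ?thesis unfolding b_def using F(4) by simp
  qed
  ultimately show ?thesis by blast
qed

lemma pert_pow: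
  fixes N :: "'r::comm_ring_1 \<Rightarrow> real"
  assumes nn: "is_na_norm N" and x: "N x \<le> 1" and b: "N b \<le> P" and P: "P \<le> 1"
  shows "N ((x + b) ^ q) \<le> max (N (x ^ q)) P"
proof -
  note F = na_norm_facts[OF nn]
  have xb: "N (x + b) \<le> 1" using N_add_le1[OF nn x] b P by simp
  have "(x + b) ^ q - x ^ q = ((x + b) - x) * (\<Sum>i<q. x ^ (q - Suc i) * (x + b) ^ i)"
    by (rule power_diff_sumr2)
  then have e: "(x + b) ^ q = x ^ q + b * (\<Sum>i<q. x ^ (q - Suc i) * (x + b) ^ i)" by (simp add: algebra_simps)
  have S: "N (\<Sum>i<q. x ^ (q - Suc i) * (x + b) ^ i) \<le> 1"
  proof (rule N_sum_le[OF nn])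
    fix i
    have "N (x ^ (q - Suc i) * (x + b) ^ i) \<le> N (x ^ (q - Suc i)) * N ((x + b) ^ i)" by (rule F(5))
    also have "\<dots> \<le> 1" using N_pow_le1[OF nn x] N_pow_le1[OF nn xb] F(1) by (simp add: mult_le_one)
    finally show "N (x ^ (q - Suc i) * (x + b) ^ i) \<le> 1" .
  qed simp
  have "N (b * (\<Sum>i<q. x ^ (q - Suc i) * (x + b) ^ i)) \<le> N b * 1"
    using F(5) S F(1)[of b] by (meson mult_left_mono order.trans)
  then have "N (b * (\<Sum>i<q. x ^ (q - Suc i) * (x + b) ^ i)) \<le> P" using b by simp
  then show ?thesis unfolding e using F(3) by (meson max.mono order.trans order.refl)
qed

lemma decay:
  fixes N :: "'r::comm_ring_1 \<Rightarrow> real"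
  assumes nn: "is_na_norm N" and p: "prime p" and P: "N (of_nat p) \<le> P" and P1: "P \<le> 1"
    and powb: "\<And>k. N (u ^ k) \<le> 1"
  shows "N ((u - 1) ^ (p ^ m)) \<le> max (N (u ^ (p ^ m) - 1)) P"
proof -
  define y where "y = (\<lambda>j. u ^ (p ^ j) - 1)"
  have yb: "N (y j) \<le> 1" for j unfolding y_def using N_diff_le1[OF nn powb] .
  have ystep: "\<exists>b. y j ^ p = y (Suc j) + b \<and> N b \<le> P" for j
  proof -
    obtain b where b: "y j ^ p = ((1 + y j) ^ p - 1) + b" "N b \<le> P"
      using frob_step[OF nn p P yb] by blast
    have "(1 + y j) ^ p = u ^ (p ^ Suc j)" unfolding y_def by (simp add: power_mult[symmetric] mult.commute)
    then show ?thesis using b unfolding y_def by auto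
  qed
  have main: "\<forall>j. j + i = m \<longrightarrow> N (y j ^ (p ^ i)) \<le> max (N (y m)) P" for i
  proof (induction i)
    case 0 then show ?case by simp
  next
    case (Suc i)
    show ?case
    proof (intro allI impI)
      fix j assume j: "j + Suc i = m"
      obtain b where b: "y j ^ p = y (Suc j) + b" "N b \<le> P" using ystep by blast
      have "y j ^ (p ^ Suc i) = (y (Suc j) + b) ^ (p ^ i)"
        by (simp add: b(1)[symmetric] power_mult[symmetric] mult.commute)
      also have "N \<dots> \<le> max (N (y (Suc j) ^ (p ^ i))) P" by (rule pert_pow[OF nn yb b(2) P1])
      also have "\<dots> \<le> max (N (y m)) P" using Suc.IH j by simp
      finally show "N (y j ^ (p ^ Suc i)) \<le> max (N (y m)) P" .
    qed
  qed
  show ?thesis using main[of m] unfolding y_def by simp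
qed



lemma N_pow_mult_le: "is_na_norm N \<Longrightarrow> N (x ^ k) \<le> N x ^ k"
proof (induction k)
  case 0 then show ?case by (simp add: is_na_norm_def)
next
  case (Suc k)
  have "N (x ^ Suc k) \<le> N x * N (x ^ k)" using na_norm_facts(5)[OF Suc.prems] by simp
  also have "\<dots> \<le> N x * N x ^ k" using Suc na_norm_facts(1)[OF Suc.prems] by (simp add: mult_left_mono)
  finally show ?case by simp
qed

lemma pow_weight_bound:
  fixes N :: "'r::comm_ring_1 \<Rightarrow> real"
  assumes nn: "is_na_norm N" and g1: "N g \<le> 1" and M: "M > 0" and gM: "N (g ^ M) \<le> \<beta>"
    and b: "\<beta> > 0" and c: "c ^ M = 1 / \<beta>" and c1: "c \<ge> 1"
  shows "N (g ^ a) * c ^ a \<le> 1 / \<beta>"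
proof -
  note F = na_norm_facts[OF nn]
  define q r where "q = a div M" and "r = a mod M"
  have a: "a = M * q + r" unfolding q_def r_def by simp
  have r: "r < M" unfolding r_def using M by simp
  have "N (g ^ a) = N ((g ^ M) ^ q * g ^ r)" unfolding a by (simp add: power_add power_mult)
  also have "\<dots> \<le> N ((g ^ M) ^ q) * N (g ^ r)" by (rule F(5))
  also have "\<dots> \<le> \<beta> ^ q * 1"
  proof (rule mult_mono)
    show "N ((g ^ M) ^ q) \<le> \<beta> ^ q"
      using N_pow_mult_le[OF nn, of "g ^ M" q] power_mono[OF gM F(1), of q] by linarith
    show "N (g ^ r) \<le> 1" by (rule N_pow_le1[OF nn g1])
  qed (use b F(1) in auto)
  finally have ga: "N (g ^ a) \<le> \<beta> ^ q" by simp
  have "c ^ a = (1 / \<beta>) ^ q * c ^ r" unfolding a by (simp add: power_add power_mult c)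
  then have "N (g ^ a) * c ^ a \<le> \<beta> ^ q * ((1 / \<beta>) ^ q * c ^ r)"
    using ga c1 b by (simp add: mult_right_mono)
  also have "\<dots> = c ^ r" using b by (simp add: power_one_over field_simps)
  also have "\<dots> \<le> c ^ M" using r c1 by (simp add: power_increasing)
  finally show ?thesis using c by simp
qed

lemma iter:
  fixes N1 :: "'r::comm_ring_1 \<Rightarrow> real" and K :: "'r set"
  assumes G: "finite G"
    and nn1: "is_na_norm N1" and K1: "1 \<in> K" and Kmul: "\<And>x y. x \<in> K \<Longrightarrow> y \<in> K \<Longrightarrow> x * y \<in> K"
    and KN1: "\<And>k. k \<in> K \<Longrightarrow> N1 k \<le> 1"
    and w1: "\<And>y. N1 (w * y) = a * N1 y" and apos: "a > 0"
    and Gg1: "\<And>g. g \<in> G \<Longrightarrow> N1 g \<le> 1"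
    and Gg: "\<And>g. g \<in> G \<Longrightarrow> \<exists>M. N1 (g ^ M) < 1"
  shows "\<exists>N'. is_na_norm N' \<and> (\<forall>y. N' y \<le> N1 y) \<and> (\<exists>C>0. \<forall>y. N1 y \<le> C * N' y) \<and>
     (\<forall>k\<in>K. N' k \<le> 1) \<and> (\<forall>y. N' (w * y) = a * N' y) \<and> (\<forall>g\<in>G. N' g < 1)"
  using G Gg1 Gg
proof (induction G rule: finite_induct)
  case empty
  show ?case
    by (rule exI[of _ N1]) (use nn1 KN1 w1 in \<open>auto intro!: exI[of _ 1]\<close>)
next
  case (insert g G)
  then obtain N' C where N': "is_na_norm N'" "\<forall>y. N' y \<le> N1 y" "C > 0" "\<forall>y. N1 y \<le> C * N' y"
     "\<forall>k\<in>K. N' k \<le> 1" "\<forall>y. N' (w * y) = a * N' y" "\<forall>g\<in>G. N' g < 1"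
    by blast
  note F = na_norm_facts[OF N'(1)]
  obtain M where M: "N1 (g ^ M) < 1" using insert.prems(2) by blast
  have M0: "M > 0" using M nn1 by (cases M) (auto simp: is_na_norm_def)
  define \<beta> where "\<beta> = max (N' (g ^ M)) (1/2)"
  have b: "\<beta> > 0" "\<beta> < 1" using M N'(2) unfolding \<beta>_def by (auto simp: max_def) (meson le_less_trans)
  have gM: "N' (g ^ M) \<le> \<beta>" unfolding \<beta>_def by simp
  define c where "c = root M (1 / \<beta>)"
  have c: "c ^ M = 1 / \<beta>" unfolding c_def using M0 b by simp
  have c1: "c > 1" unfolding c_def using M0 b by (simp add: real_root_gt_1_iff)
  have g1: "N' g \<le> 1" using insert.prems(1) N'(2) by (meson insertI1 order.trans)
  define W where "W = {(k * g ^ j, c ^ j) | k j. k \<in> K}"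
  have Nw: "N' w = a" using N'(6)[rule_format, of 1] F(6) by simp
  obtain N2 where N2: "is_na_norm N2" "\<forall>y. N2 y \<le> N' y" "\<forall>y. N' y \<le> (1 / \<beta>) * N2 y"
     "\<forall>m b. (m, b) \<in> W \<longrightarrow> N2 m * b \<le> 1" "\<forall>y. N2 (w * y) = N' w * N2 y"
  proof (rule renorm[OF N'(1), of W "1 / \<beta>" w, elim_format])
    have "(1 * g ^ 0, c ^ 0) \<in> W" unfolding W_def using K1 by blast
    then show "(1, 1) \<in> W" by simp
    show "(m * m', b * b') \<in> W" if mb: "(m, b) \<in> W" "(m', b') \<in> W" for m b m' b'
    proof -
      obtain k j where 1: "m = k * g ^ j" "b = c ^ j" "k \<in> K" using mb(1) unfolding W_def by blast
      obtain k' j' where 2: "m' = k' * g ^ j'" "b' = c ^ j'" "k' \<in> K" using mb(2) unfolding W_def by blast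
      have "m * m' = (k * k') * g ^ (j + j')" "b * b' = c ^ (j + j')"
        unfolding 1 2 by (simp_all add: power_add algebra_simps)
      then show ?thesis unfolding W_def using Kmul[OF 1(3) 2(3)] by blast
    qed
    show "b > 0" if "(m, b) \<in> W" for m b using that c1 unfolding W_def by auto
    show "N' m * b \<le> 1 / \<beta>" if mb: "(m, b) \<in> W" for m b
    proof -
      obtain k j where 1: "m = k * g ^ j" "b = c ^ j" "k \<in> K" using mb unfolding W_def by blast
      have "N' m \<le> N' k * N' (g ^ j)" unfolding 1 by (rule F(5))
      also have "\<dots> \<le> N' (g ^ j)" using N'(5) 1(3) F(1) by (simp add: mult_left_le_one_le)
      finally have "N' m * b \<le> N' (g ^ j) * c ^ j" unfolding 1 using c1 by (simp add: mult_right_mono)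
      also have "\<dots> \<le> 1 / \<beta>" by (rule pow_weight_bound[OF N'(1) g1 M0 gM b(1) c]) (use c1 in simp)
      finally show ?thesis .
    qed
    show "N' (w * y) = N' w * N' y" for y using N'(6) Nw by simp
    show "N' w > 0" using Nw apos by simp
  qed blast
  have N2g: "N2 g < 1"
  proof -
    have "(1 * g ^ 1, c ^ 1) \<in> W" unfolding W_def using K1 by blast
    then have "N2 g * c \<le> 1" using N2(4) by simp
    then have "N2 g \<le> 1 / c" using c1 by (simp add: field_simps)
    also have "\<dots> < 1" using c1 by simp
    finally show ?thesis .
  qed
  show ?case
  proof (rule exI[of _ N2], intro conjI)
    show "is_na_norm N2" by (rule N2(1))
    show "\<forall>y. N2 y \<le> N1 y" using N2(2) N'(2) order.trans by blast
    show "\<exists>C>0. \<forall>y. N1 y \<le> C * N2 y"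
    proof (intro exI conjI allI)
      show "C * (1 / \<beta>) > 0" using N'(3) b by simp
      fix y
      have "N1 y \<le> C * N' y" using N'(4) by blast
      also have "\<dots> \<le> C * ((1 / \<beta>) * N2 y)" using N2(3)[rule_format, of y] N'(3) by (meson less_imp_le mult_left_mono)
      finally show "N1 y \<le> C * (1 / \<beta>) * N2 y" by (simp add: mult.assoc)
    qed
    show "\<forall>k\<in>K. N2 k \<le> 1"
    proof
      fix k assume "k \<in> K"
      then have "(k * g ^ 0, c ^ 0) \<in> W" unfolding W_def by blast
      then show "N2 k \<le> 1" using N2(4)[rule_format, of k 1] by simp
    qed
    show "\<forall>y. N2 (w * y) = a * N2 y" using N2(5) Nw by simp
    show "\<forall>x\<in>insert g G. N2 x < 1"
    proof
      fix x assume "x \<in> insert g G"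
      then show "N2 x < 1"
      proof
        assume "x = g" then show ?thesis using N2g by simp
      next
        assume "x \<in> G" then show ?thesis using N'(7) N2(2) le_less_trans by blast
      qed
    qed
  qed
qed



lemma decomp:
  assumes fs: "okfs fs" and kc: "cont_character p fs N \<kappa>" and t: "t \<in> Tzero p fs" and r: "r \<in> Tzero p fs"
    and agree: "\<And>i. i < length fs \<Longrightarrow> r i n = t i n"
  shows "\<exists>s \<in> Tzero p fs. (\<forall>i<length fs. s i n = Te p fs i n) \<and> \<kappa> t = \<kappa> r * \<kappa> s"
proof -
  obtain b where b: "b \<in> Tzero p fs" "Tmult p fs r b = Te p fs" using Tinv[OF fs r] by blast
  define s where "s = Tmult p fs b t"
  have s: "s \<in> Tzero p fs" unfolding s_def using Tmult_in[OF fs b(1) t] .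
  have lev: "s i n = Te p fs i n" if i: "i < length fs" for i
  proof -
    have "s i n = red p n (fs ! i) (b i n * t i n)" unfolding s_def by (rule Tmult_level[OF i])
    also have "\<dots> = red p n (fs ! i) (r i n * b i n)" using agree[OF i] by (simp add: mult.commute)
    also have "\<dots> = Tmult p fs r b i n" by (rule Tmult_level[OF i, symmetric])
    finally show ?thesis using b(2) by simp
  qed
  have "Tmult p fs r s = t"
    unfolding s_def using Tmult_assoc[OF fs, of p r b t] b(2) Tmult_e[OF fs t] by simp
  then have "\<kappa> t = \<kappa> r * \<kappa> s" using kc r s unfolding cont_character_def by metis
  then show ?thesis using s lev by blast
qed

lemma ker_level:
  assumes fs: "okfs fs" and t: "t \<in> Tker p fs (k + n)" and i: "i < length fs"
  shows "t i n = Te p fs i n"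
proof -
  have f: "okf (fs ! i)" using okfs_nth[OF fs i] .
  have ti: "t i \<in> Ocarr p (fs ! i)" using t i unfolding Tker_def Tzero_def Ounits_def by auto
  have "t i n = red p n (fs ! i) (t i (k + n))" using Ocarr_coh[OF f ti, of n "k + n"] by simp
  also have "\<dots> = red p n (fs ! i) (red p (k + n) (fs ! i) 1)" using t i unfolding Tker_def Oone_def by auto
  also have "\<dots> = red p n (fs ! i) 1" using red_red_le[OF f, of n "k + n"] by simp
  finally show ?thesis unfolding Te_def Oone_def using i by simp
qed

definition rep :: "nat \<Rightarrow> int poly list \<Rightarrow> (nat \<Rightarrow> nat \<Rightarrow> int poly) set \<Rightarrow> int poly list \<Rightarrow> (nat \<Rightarrow> nat \<Rightarrow> int poly)" where
  "rep n fs A v = (SOME t. t \<in> A \<and> cl n fs t = v)"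

lemma rep_props:
  assumes "t \<in> A"
  shows "rep n fs A (cl n fs t) \<in> A" "\<And>i. i < length fs \<Longrightarrow> rep n fs A (cl n fs t) i n = t i n"
proof -
  have "\<exists>t'. t' \<in> A \<and> cl n fs t' = cl n fs t" using assms by blast
  then have "rep n fs A (cl n fs t) \<in> A \<and> cl n fs (rep n fs A (cl n fs t)) = cl n fs t"
    unfolding rep_def by (rule someI_ex)
  then show "rep n fs A (cl n fs t) \<in> A" "\<And>i. i < length fs \<Longrightarrow> rep n fs A (cl n fs t) i n = t i n"
    using cl_eq by blast+
qed

lemma rep_in: "v \<in> cl n fs ` A \<Longrightarrow> rep n fs A v \<in> A"
  using rep_props(1) by blast

lemma eps_ge1: "eps p \<ge> 1" unfolding eps_def by simp

theorem mainTheorem13: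
  fixes p :: nat and fs :: "int poly list"
    and N :: "'r::comm_ring_1 \<Rightarrow> real" and w :: 'r
    and \<phi> :: "(nat \<Rightarrow> int poly) \<Rightarrow> 'r"
    and \<kappa> :: "(nat \<Rightarrow> nat \<Rightarrow> int poly) \<Rightarrow> 'r"
  assumes "prime p"
    and "\<forall>f \<in> set fs. is_local_int_ring p f"
    and "noetherian_ring TYPE('r)"
    and "banach_tate_zp p N \<phi>"
    and "mult_pseudo_unif N w"
    and "cont_character p fs N \<kappa>"
  shows "\<exists>N'. banach_tate_zp p N' \<phi> \<and>
           (\<exists>s>0. bounded_equiv (\<lambda>r. N r powr s) N') \<and>
           (\<forall>t \<in> Tzero p fs. N' (\<kappa> t) \<le> 1) \<and>
           (\<forall>t \<in> Tker p fs (eps p). N' (\<kappa> t - 1) < 1) \<and>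
           mult_pseudo_unif N' w"
proof -
  note pr = assms(1) and kc = assms(6)
  have fs: "okfs fs" using assms(2) unfolding okfs_def okf_def is_local_int_ring_def by auto
  have nn: "is_na_norm N" and compl: "norm_complete N" and zp: "zp_alg_map p N \<phi>"
    using assms(4) unfolding banach_tate_zp_def by auto
  note F = na_norm_facts[OF nn]
  have wu: "\<exists>u. w * u = 1" and Nw1: "N w < 1" and wmul: "\<And>s. N (w * s) = N w * N s"
    using assms(5) unfolding mult_pseudo_unif_def by auto
  have Nwpos: "N w > 0"
  proof -
    have "w \<noteq> 0" using wu one_neq_zero_norm[OF nn] by auto
    then show ?thesis using F(1)[of w] F(2)[of w] by simp
  qed
  have p0: "p > 0" and p2: "p \<ge> 2" using pr by (auto simp: prime_gt_0_nat prime_ge_2_nat)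
  have ke: "\<kappa> (Te p fs) = 1" using kappa_e[OF fs kc] .
  have eT: "Te p fs \<in> Tzero p fs" using Te_in[OF fs] .
  have kmul: "\<And>s t. s \<in> Tzero p fs \<Longrightarrow> t \<in> Tzero p fs \<Longrightarrow> \<kappa> (Tmult p fs s t) = \<kappa> s * \<kappa> t"
    using kc unfolding cont_character_def by blast
  obtain n0 where n0: "\<And>s. s \<in> Tzero p fs \<Longrightarrow> (\<forall>i<length fs. s i n0 = Te p fs i n0) \<Longrightarrow> N (\<kappa> s - 1) < 1"
  proof -
    have "\<exists>n. \<forall>s\<in>Tzero p fs. (\<forall>i<length fs. s i n = Te p fs i n) \<longrightarrow> N (\<kappa> s - \<kappa> (Te p fs)) < 1"
      using kc eT unfolding cont_character_def by auto
    then show ?thesis using that ke by auto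
  qed
  have small1: "N (\<kappa> s) \<le> 1" if "s \<in> Tzero p fs" "\<forall>i<length fs. s i n0 = Te p fs i n0" for s
  proof -
    have "N ((\<kappa> s - 1) + 1) \<le> max (N (\<kappa> s - 1)) (N 1)" by (rule F(3))
    then show ?thesis using n0[OF that] F(6) by simp
  qed
  define T0 where "T0 = Tzero p fs"
  define V0 where "V0 = cl n0 fs ` T0"
  have V0fin: "finite V0" unfolding V0_def T0_def using cl_finite[OF fs p0] .
  define B where "B = Max ((\<lambda>v. N (\<kappa> (rep n0 fs T0 v))) ` V0)"
  have Bge: "N (\<kappa> t) \<le> B" if t: "t \<in> Tzero p fs" for t
  proof -
    let ?r = "rep n0 fs T0 (cl n0 fs t)"
    have r: "?r \<in> Tzero p fs" using rep_props(1)[of t T0] t unfolding T0_def by simp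
    have ag: "\<And>i. i < length fs \<Longrightarrow> ?r i n0 = t i n0" using rep_props(2)[of t T0] t unfolding T0_def by simp
    obtain s where s: "s \<in> Tzero p fs" "\<forall>i<length fs. s i n0 = Te p fs i n0" "\<kappa> t = \<kappa> ?r * \<kappa> s"
      using decomp[OF fs kc t r ag] by blast
    have "N (\<kappa> t) \<le> N (\<kappa> ?r) * N (\<kappa> s)" using s(3) F(5) by simp
    also have "\<dots> \<le> N (\<kappa> ?r)" using small1[OF s(1,2)] F(1) by (simp add: mult_left_le)
    also have "\<dots> \<le> B" unfolding B_def using V0fin t unfolding V0_def T0_def by (intro Max_ge) auto
    finally show ?thesis .
  qed
  have B1: "B \<ge> 1" using Bge[OF eT] ke F(6) by simp
  define W1 where "W1 = {(\<kappa> t, 1::real) | t. t \<in> Tzero p fs}"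
  obtain N1 where N1: "is_na_norm N1" "\<forall>y. N1 y \<le> N y" "\<forall>y. N y \<le> B * N1 y"
     "\<forall>m a. (m, a) \<in> W1 \<longrightarrow> N1 m * a \<le> 1" "\<forall>y. N1 (w * y) = N w * N1 y"
  proof (rule renorm[OF nn, of W1 B w, elim_format])
    show "(1, 1) \<in> W1" unfolding W1_def using eT ke by force
    show "(m * m', a * a') \<in> W1" if mb: "(m, a) \<in> W1" "(m', a') \<in> W1" for m a m' a'
    proof -
      obtain s t where st: "m = \<kappa> s" "a = 1" "s \<in> Tzero p fs" "m' = \<kappa> t" "a' = 1" "t \<in> Tzero p fs"
        using mb unfolding W1_def by blast
      have "m * m' = \<kappa> (Tmult p fs s t)" using kmul st by simp
      then show ?thesis unfolding W1_def using st Tmult_in[OF fs st(3) st(6)] by auto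
    qed
    show "a > 0" if "(m, a) \<in> W1" for m a using that unfolding W1_def by auto
    show "N m * a \<le> B" if "(m, a) \<in> W1" for m a using that Bge unfolding W1_def by auto
    show "N (w * y) = N w * N y" for y by (rule wmul)
    show "N w > 0" by (rule Nwpos)
  qed blast
  have N1k: "N1 (\<kappa> t) \<le> 1" if "t \<in> Tzero p fs" for t
    using N1(4) that unfolding W1_def by force
  define Te' where "Te' = Tker p fs (eps p)"
  have TeT: "Te' \<subseteq> Tzero p fs" unfolding Te'_def Tker_def by auto
  define G where "G = (\<lambda>v. \<kappa> (rep n0 fs Te' v) - 1) ` (cl n0 fs ` Te')"
  have Gfin: "finite G"
  proof -
    have "cl n0 fs ` Te' \<subseteq> cl n0 fs ` Tzero p fs" using TeT by auto
    then have "finite (cl n0 fs ` Te')" using cl_finite[OF fs p0] finite_subset by blast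
    then show ?thesis unfolding G_def by simp
  qed
  have P: "N1 (of_nat p) \<le> 1 / real p" using N1(2) norm_p[OF zp] order.trans by blast
  have P1: "1 / real p \<le> 1" "1 / real p < 1" using p2 by auto
  obtain Nf where Nf: "is_na_norm Nf" "\<forall>y. Nf y \<le> N1 y" "\<exists>C>0. \<forall>y. N1 y \<le> C * Nf y"
     "\<forall>k\<in>\<kappa> ` Tzero p fs. Nf k \<le> 1" "\<forall>y. Nf (w * y) = N w * Nf y" "\<forall>g\<in>G. Nf g < 1"
  proof (rule iter[OF Gfin N1(1), of "\<kappa> ` Tzero p fs" w "N w", elim_format])
    show "1 \<in> \<kappa> ` Tzero p fs" using eT ke by force
    show "x * y \<in> \<kappa> ` Tzero p fs" if "x \<in> \<kappa> ` Tzero p fs" "y \<in> \<kappa> ` Tzero p fs" for x y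
      using that kmul Tmult_in[OF fs] by (metis (no_types, lifting) image_iff)
    show "N1 k \<le> 1" if "k \<in> \<kappa> ` Tzero p fs" for k using that N1k by auto
    show "N1 (w * y) = N w * N1 y" for y using N1(5) by blast
    show "N w > 0" by (rule Nwpos)
    show "N1 g \<le> 1" if g: "g \<in> G" for g
    proof -
      obtain v where v: "v \<in> cl n0 fs ` Te'" "g = \<kappa> (rep n0 fs Te' v) - 1" using g unfolding G_def by blast
      have "rep n0 fs Te' v \<in> Tzero p fs" using rep_in[OF v(1)] TeT by auto
      then show ?thesis unfolding v(2) using N_diff_le1[OF N1(1) N1k] by blast
    qed
    show "\<exists>M. N1 (g ^ M) < 1" if g: "g \<in> G" for g
    proof -
      obtain v where v: "v \<in> cl n0 fs ` Te'" "g = \<kappa> (rep n0 fs Te' v) - 1" using g unfolding G_def by blast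
      define r where "r = rep n0 fs Te' v"
      have rT: "r \<in> Te'" unfolding r_def using rep_in[OF v(1)] .
      have r0: "r \<in> Tzero p fs" using rT TeT by auto
      have powb: "N1 (\<kappa> r ^ k) \<le> 1" for k
        using N1k[OF tpow_in[OF fs r0, of k]] kappa_tpow[OF fs kc r0, of k] by simp
      have d: "N1 ((\<kappa> r - 1) ^ (p ^ n0)) \<le> max (N1 (\<kappa> r ^ (p ^ n0) - 1)) (1 / real p)"
        by (rule decay[OF N1(1) pr P P1(1) powb])
      have tk: "tpow p fs r (p ^ n0) \<in> Tker p fs (eps p + n0)"
        using tpow_ker[OF fs _ eps_ge1] rT unfolding Te'_def by blast
      have tz: "tpow p fs r (p ^ n0) \<in> Tzero p fs" using tpow_in[OF fs r0] .
      have "N (\<kappa> (tpow p fs r (p ^ n0)) - 1) < 1"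
        using n0[OF tz] ker_level[OF fs tk] by blast
      then have "N1 (\<kappa> r ^ (p ^ n0) - 1) < 1"
        using kappa_tpow[OF fs kc r0] N1(2) le_less_trans by metis
      then have "N1 ((\<kappa> r - 1) ^ (p ^ n0)) < 1" using d P1(2) by linarith
      then show ?thesis unfolding v(2) r_def[symmetric] by blast
    qed
  qed blast
  obtain C where C: "C > 0" "\<forall>y. N1 y \<le> C * Nf y" using Nf(3) by blast
  note FF = na_norm_facts[OF Nf(1)]
  have Nf_le: "Nf y \<le> N y" for y using Nf(2) N1(2) order.trans by blast
  have N_le: "N y \<le> (B * C) * Nf y" for y
  proof -
    have "N y \<le> B * N1 y" using N1(3) by blast
    also have "\<dots> \<le> B * (C * Nf y)" using C(2) B1 by (simp add: mult_left_mono)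
    finally show ?thesis by (simp add: mult.assoc)
  qed
  have BC: "B * C > 0" using B1 C(1) by simp
  have Nfk: "\<forall>t \<in> Tzero p fs. Nf (\<kappa> t) \<le> 1" using Nf(4) by blast
  have Nfker: "\<forall>t \<in> Tker p fs (eps p). Nf (\<kappa> t - 1) < 1"
  proof
    fix t assume tT: "t \<in> Tker p fs (eps p)"
    then have t: "t \<in> Te'" unfolding Te'_def .
    have t0: "t \<in> Tzero p fs" using t TeT by auto
    let ?r = "rep n0 fs Te' (cl n0 fs t)"
    have r: "?r \<in> Te'" using rep_props(1)[OF t] .
    have r0: "?r \<in> Tzero p fs" using r TeT by auto
    have ag: "\<And>i. i < length fs \<Longrightarrow> ?r i n0 = t i n0" using rep_props(2)[OF t] .
    obtain s where s: "s \<in> Tzero p fs" "\<forall>i<length fs. s i n0 = Te p fs i n0" "\<kappa> t = \<kappa> ?r * \<kappa> s"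
      using decomp[OF fs kc t0 r0 ag] by blast
    have gG: "\<kappa> ?r - 1 \<in> G" unfolding G_def using t by blast
    have e: "\<kappa> t - 1 = (\<kappa> ?r - 1) + \<kappa> ?r * (\<kappa> s - 1)" using s(3) by (simp add: algebra_simps)
    have "Nf (\<kappa> ?r * (\<kappa> s - 1)) \<le> Nf (\<kappa> ?r) * Nf (\<kappa> s - 1)" by (rule FF(5))
    also have "\<dots> \<le> Nf (\<kappa> s - 1)" using Nfk r0 FF(1) by (simp add: mult_left_le_one_le)
    also have "\<dots> \<le> N (\<kappa> s - 1)" by (rule Nf_le)
    also have "\<dots> < 1" using n0[OF s(1,2)] .
    finally have a: "Nf (\<kappa> ?r * (\<kappa> s - 1)) < 1" .
    have b: "Nf (\<kappa> ?r - 1) < 1" using Nf(6) gG by blast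
    show "Nf (\<kappa> t - 1) < 1" unfolding e using FF(3) a b by (meson max_less_iff_conj le_less_trans)
  qed
  have Nfw: "Nf w = N w" using Nf(5)[rule_format, of 1] FF(6) by simp
  have compl_f: "norm_complete Nf"
    unfolding norm_complete_def
  proof (intro allI impI)
    fix X :: "nat \<Rightarrow> 'r"
    assume cau: "\<forall>e>0. \<exists>M. \<forall>m\<ge>M. \<forall>n\<ge>M. Nf (X m - X n) < e"
    have "\<forall>e>0. \<exists>M. \<forall>m\<ge>M. \<forall>n\<ge>M. N (X m - X n) < e"
    proof (intro allI impI)
      fix e :: real assume e: "e > 0"
      obtain M where M: "\<forall>m\<ge>M. \<forall>n\<ge>M. Nf (X m - X n) < e / (B * C)" using cau e BC by (meson divide_pos_pos)
      show "\<exists>M. \<forall>m\<ge>M. \<forall>n\<ge>M. N (X m - X n) < e"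
      proof (intro exI allI impI)
        fix m n assume "M \<le> m" "M \<le> n"
        then have "Nf (X m - X n) < e / (B * C)" using M by blast
        then have "(B * C) * Nf (X m - X n) < e" using BC by (simp add: field_simps)
        then show "N (X m - X n) < e" using N_le le_less_trans by blast
      qed
    qed
    then obtain L where L: "(\<lambda>n. N (X n - L)) \<longlonglongrightarrow> 0" using compl unfolding norm_complete_def by blast
    have "(\<lambda>n. Nf (X n - L)) \<longlonglongrightarrow> 0"
    proof (rule Lim_null_comparison[OF _ L])
      show "\<forall>\<^sub>F n in sequentially. norm (Nf (X n - L)) \<le> N (X n - L)"
        using Nf_le FF(1) by simp
    qed
    then show "\<exists>L. (\<lambda>n. Nf (X n - L)) \<longlonglongrightarrow> 0" by blast
  qed
  have zpf: "zp_alg_map p Nf \<phi>"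
    using zp Nf_le unfolding zp_alg_map_def by (meson order.trans)
  have mpu: "mult_pseudo_unif Nf w"
    unfolding mult_pseudo_unif_def using wu Nfw Nw1 Nf(5) by simp
  have bt: "banach_tate_zp p Nf \<phi>"
    unfolding banach_tate_zp_def using Nf(1) compl_f mpu zpf by blast
  have be: "bounded_equiv (\<lambda>r. N r powr 1) Nf"
    unfolding bounded_equiv_def
  proof (intro exI conjI allI)
    show "1 / (B * C) > 0" using BC by simp
    show "(1::real) > 0" by simp
    fix r
    show "1 / (B * C) * N r powr 1 \<le> Nf r" using N_le[of r] BC F(1)[of r] by (simp add: field_simps)
    show "Nf r \<le> 1 * N r powr 1" using Nf_le[of r] F(1)[of r] by simp
  qed
  show ?thesis
    using bt be Nfk Nfker mpu by (intro exI[of _ Nf]) (auto intro!: exI[of _ "1::real"])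
qed


end
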